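(* For complex numbers $x_0,\dots,x_q$ (repetitions allowed) and $\tau\in\mathbb{R}$, $$\sum_{\substack{i,j=0\\ i\le j}}^{q}x_i\,e^{-\tau[x_0,\ldots,x_q,x_i,x_j]}=\begin{cases}\dfrac{\tau^2x_0}{2}e^{-\tau[x_0,\ldots,x_q]}+\dfrac{\tau^2}{2}e^{-\tau[x_1,\ldots,x_q]}-\displaystyle\sum_{i=1}^{q}i\,e^{-\tau[x_0,\ldots,x_q,x_i]}, & q>0,\\[2mm] \dfrac{\tau^2x_0}{2}e^{-\tau x_0}, & q=0.\end{cases}$$
   Context: For $t\in\mathbb{R}$ and numbers $y_0,\dots,y_p$ (repetitions allowed), $e^{t[y_0,\ldots,y_p]}$ denotes the divided difference of $f(x)=e^{tx}$, $f[y_0,\ldots,y_p]=\frac{1}{2\pi i}\oint_\Gamma\frac{f(x)}{\prod_{i=0}^p(x-y_i)}\,\mathrm{d}x$, $\Gamma$ a positively oriented contour enclosing all $y_i$. Multisets such as $[x_0,\ldots,x_q,x_i,x_j]$ contain the listed extra copies of repeated entries. *)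

theory Defs
  imports "HOL-Complex_Analysis.Complex_Analysis"
begin

text \<open>Divided difference of an entire function f at the multiset of nodes ys (given as a list,
repetitions allowed), defined as in the paper by the contour integral
  f[y_0,...,y_p] = 1/(2 pi i) \<ointegral>_\<Gamma> f(z) / \<Prod>(z - y_i) dz,
where the contour \<Gamma> is taken to be the positively oriented circle centred at 0 whose radius
exceeds the modulus of every node (so it encloses all nodes).\<close>

definition divdiff :: "(complex \<Rightarrow> complex) \<Rightarrow> complex list \<Rightarrow> complex" where
  "divdiff f ys =
     contour_integral (circlepath 0 (1 + sum_list (map norm ys)))
       (\<lambda>z. f z / prod_list (map (\<lambda>y. z - y) ys)) / (2 * of_real pi * \<i>)"

definition expdd :: "real \<Rightarrow> complex list \<Rightarrow> complex" where
  "expdd t ys = divdiff (\<lambda>z. exp (complex_of_real t * z)) ys"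

end

theory Submission imports Defs begin

lemma holo_prodlist: "(\<lambda>z. prod_list (map (\<lambda>y. z - y) ys)) holomorphic_on S"
  by (induction ys) (auto intro!: holomorphic_intros)

lemma norm_le_sum_list: fixes ys :: "complex list" shows "y \<in> set ys \<Longrightarrow> norm y \<le> sum_list (map norm ys)"
proof (induction ys)
  case (Cons a ys)
  have "0 \<le> sum_list (map norm ys)" by (induction ys) auto
  show ?case
  proof (cases "y = a")
    case True then show ?thesis using \<open>0 \<le> sum_list (map norm ys)\<close> by simp
  next
    case False then have "norm y \<le> sum_list (map norm ys)" using Cons by simp
    then show ?thesis using norm_ge_zero[of a] by (simp del: norm_ge_zero)
  qed
qed simp

lemma dd_circle:
  assumes hol: "f holomorphic_on UNIV" and r: "\<forall>y\<in>set ys. norm y < r" and rpos: "0 < r"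
  shows "((\<lambda>z. f z / prod_list (map (\<lambda>y. z - y) ys)) has_contour_integral
            (2 * of_real pi * \<i> * divdiff f ys)) (circlepath 0 r)"
proof -
  define h where "h = (\<lambda>z. f z / prod_list (map (\<lambda>y. z - y) ys))"
  define R where "R = 1 + sum_list (map norm ys)"
  define S where "S = - set ys"
  have oS: "open S" unfolding S_def by (simp add: finite_imp_closed open_Compl)
  have holh: "h holomorphic_on S" unfolding h_def
    by (intro holomorphic_intros holomorphic_on_subset[OF hol] holo_prodlist)
       (auto simp: S_def prod_list_zero_iff)
  have Rpos: "0 < R" unfolding R_def by (smt (verit) norm_ge_zero sum_list_nonneg ex_map_conv)
  have Rbig: "norm y < R" if "y \<in> set ys" for y
  proof -
    have "norm y \<le> sum_list (map norm ys)"
      using that by (rule norm_le_sum_list)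
    then show ?thesis unfolding R_def by simp
  qed
  have seg: "closed_segment (circlepath 0 R t) (circlepath 0 r t) \<subseteq> S" for t
  proof
    fix w assume "w \<in> closed_segment (circlepath 0 R t) (circlepath 0 r t)"
    then obtain u where u: "0 \<le> u" "u \<le> 1"
      and w: "w = (1 - u) *\<^sub>R circlepath 0 R t + u *\<^sub>R circlepath 0 r t"
      by (auto simp: closed_segment_def)
    define E where "E = exp (2 * of_real pi * \<i> * of_real t)"
    have nE: "norm E = 1" unfolding E_def by (simp add: norm_exp)
    have "w = of_real ((1 - u) * R + u * r) * E"
      unfolding w circlepath E_def by (simp add: scaleR_conv_of_real algebra_simps)
    moreover have "0 \<le> (1 - u) * R + u * r" using u Rpos rpos by simp
    ultimately have nw: "norm w = (1 - u) * R + u * r"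
      using nE by (simp only: norm_mult norm_of_real) simp
    have "min R r \<le> (1 - u) * R + u * r"
    proof -
      have "(1 - u) * min R r \<le> (1 - u) * R" using u by (intro mult_left_mono) auto
      moreover have "u * min R r \<le> u * r" using u by (intro mult_left_mono) auto
      moreover have "min R r = (1-u)*min R r + u*min R r" by (simp add: algebra_simps)
      ultimately show ?thesis by linarith
    qed
    then show "w \<in> S" unfolding S_def using Rbig r nw by force
  qed
  have hom: "homotopic_loops S (circlepath 0 R) (circlepath 0 r)"
    by (rule homotopic_loops_linear) (use seg in auto)
  have eq: "contour_integral (circlepath 0 R) h = contour_integral (circlepath 0 r) h"
    by (rule Cauchy_theorem_homotopic_loops[OF hom oS holh]) auto
  have int: "h contour_integrable_on circlepath 0 r"
    by (rule contour_integrable_holomorphic_simple[OF holh oS]) (use r rpos in \<open>auto simp: S_def\<close>)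
  have "divdiff f ys = contour_integral (circlepath 0 R) h / (2 * of_real pi * \<i>)"
    unfolding divdiff_def h_def R_def by simp
  then have "2 * of_real pi * \<i> * divdiff f ys = contour_integral (circlepath 0 r) h"
    using eq by simp
  then show ?thesis using has_contour_integral_integral[OF int] unfolding h_def by simp
qed


lemma dP:
  assumes "\<forall>k\<le>q. z \<noteq> x k"
  shows "((\<lambda>w. \<Prod>k\<le>q. (w - x k)) has_field_derivative
           (\<Prod>k\<le>q. (z - x k)) * (\<Sum>k\<le>q. 1 / (z - x k))) (at z)"
proof -
  have "((\<lambda>w. \<Prod>k\<in>{..q}. (w - x k)) has_field_derivative
           (\<Prod>k\<in>{..q}. (z - x k)) * (\<Sum>k\<in>{..q}. 1 / (z - x k))) (at z)"
    by (rule has_field_derivative_prod'[where f = "\<lambda>k w. w - x k"])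
       (use assms in \<open>auto intro!: derivative_eq_intros\<close>)
  then show ?thesis by simp
qed

lemma dp1:
  assumes "\<forall>k\<le>q. z \<noteq> x k"
  shows "((\<lambda>w. \<Sum>k\<le>q. 1 / (w - x k)) has_field_derivative
           - (\<Sum>k\<le>q. 1 / (z - x k)^2)) (at z)"
proof -
  have "((\<lambda>w. \<Sum>k\<le>q. 1 / (w - x k)) has_field_derivative
           (\<Sum>k\<le>q. - (1 / (z - x k)^2))) (at z)"
    by (rule DERIV_sum) (use assms in \<open>auto intro!: derivative_eq_intros simp: power2_eq_square\<close>)
  then show ?thesis by (simp add: sum_negf)
qed

lemma sq_sum:
  fixes a :: "nat \<Rightarrow> complex"
  shows "2 * (\<Sum>j\<le>q. \<Sum>i\<le>j. a i * a j) = (\<Sum>k\<le>q. a k)^2 + (\<Sum>k\<le>q. (a k)^2)"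
proof (induction q)
  case 0 then show ?case by (simp add: power2_eq_square)
next
  case (Suc q)
  have "(\<Sum>i\<le>Suc q. a i * a (Suc q)) = (\<Sum>i\<le>q. a i) * a (Suc q) + a (Suc q) * a (Suc q)"
    by (simp add: sum_distrib_right)
  then show ?case using Suc by (simp add: algebra_simps power2_eq_square)
qed

lemma key:
  fixes x :: "nat \<Rightarrow> complex"
  assumes "\<forall>k\<le>q. z \<noteq> x k"
  shows "(\<Sum>j\<le>q. \<Sum>i\<le>j. x i * (1/(z - x i)) * (1/(z - x j))) + (\<Sum>i=1..q. of_nat i * (1/(z - x i)))
       = z * (\<Sum>j\<le>q. \<Sum>i\<le>j. (1/(z - x i)) * (1/(z - x j))) - (\<Sum>k\<le>q. 1/(z - x k))"
  using assms
proof (induction q)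
  case 0
  then have "z - x 0 \<noteq> 0" by auto
  then have "x 0 * (1/(z - x 0)) = z * (1/(z - x 0)) - 1" by (simp add: field_simps)
  then have "x 0 * (1/(z - x 0)) * (1/(z - x 0)) = z * (1/(z - x 0)) * (1/(z - x 0)) - 1/(z - x 0)"
    by (metis left_diff_distrib mult_1)
  then show ?case by simp
next
  case (Suc q)
  have ne: "z \<noteq> x k" if "k \<le> Suc q" for k using Suc.prems that by auto
  have IH: "(\<Sum>j\<le>q. \<Sum>i\<le>j. x i * (1/(z - x i)) * (1/(z - x j))) + (\<Sum>i=1..q. of_nat i * (1/(z - x i)))
       = z * (\<Sum>j\<le>q. \<Sum>i\<le>j. (1/(z - x i)) * (1/(z - x j))) - (\<Sum>k\<le>q. 1/(z - x k))"
    using Suc by auto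
  have t1: "x i * (1/(z - x i)) = z * (1/(z - x i)) - 1" if "i \<le> Suc q" for i
    using ne[OF that] by (simp add: field_simps)
  have "(\<Sum>i\<le>Suc q. x i * (1/(z - x i)) * (1/(z - x (Suc q))))
      = (\<Sum>i\<le>Suc q. (z * (1/(z - x i)) - 1) * (1/(z - x (Suc q))))"
  proof (rule sum.cong[OF refl])
    fix i assume "i \<in> {..Suc q}"
    then have "x i * (1/(z - x i)) = z * (1/(z - x i)) - 1" using t1 by simp
    then show "x i * (1/(z - x i)) * (1/(z - x (Suc q))) = (z * (1/(z - x i)) - 1) * (1/(z - x (Suc q)))"
      by (rule arg_cong[where f="\<lambda>v. v * (1/(z - x (Suc q)))"])
  qed
  also have "\<dots> = z * (\<Sum>i\<le>Suc q. (1/(z - x i)) * (1/(z - x (Suc q)))) - of_nat (Suc (Suc q)) * (1/(z - x (Suc q)))"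
    by (simp add: sum_subtractf sum_distrib_left sum_distrib_right algebra_simps)
  finally have step: "(\<Sum>i\<le>Suc q. x i * (1/(z - x i)) * (1/(z - x (Suc q))))
      = z * (\<Sum>i\<le>Suc q. (1/(z - x i)) * (1/(z - x (Suc q)))) - of_nat (Suc (Suc q)) * (1/(z - x (Suc q)))" .
  define a where "a = (\<lambda>k. 1/(z - x k))"
  define L1 where "L1 = (\<Sum>j\<le>q. \<Sum>i\<le>j. x i * a i * a j)"
  define Ls where "Ls = (\<Sum>i\<le>Suc q. x i * a i * a (Suc q))"
  define S1 where "S1 = (\<Sum>i=1..q. of_nat i * a i)"
  define B1 where "B1 = (\<Sum>j\<le>q. \<Sum>i\<le>j. a i * a j)"
  define Bs where "Bs = (\<Sum>i\<le>Suc q. a i * a (Suc q))"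
  define P1 where "P1 = (\<Sum>k\<le>q. a k)"
  have IH': "L1 + S1 = z * B1 - P1" using IH unfolding L1_def S1_def B1_def P1_def a_def .
  have step': "Ls = z * Bs - of_nat (Suc (Suc q)) * a (Suc q)" using step unfolding Ls_def Bs_def a_def .
  have e1: "(\<Sum>j\<le>Suc q. \<Sum>i\<le>j. x i * a i * a j) = L1 + Ls" by (simp add: L1_def Ls_def)
  have e2: "(\<Sum>i=1..Suc q. of_nat i * a i) = S1 + of_nat (Suc q) * a (Suc q)" by (simp add: S1_def)
  have e3: "(\<Sum>j\<le>Suc q. \<Sum>i\<le>j. a i * a j) = B1 + Bs" by (simp add: B1_def Bs_def)
  have e4: "(\<Sum>k\<le>Suc q. a k) = P1 + a (Suc q)" by (simp add: P1_def)
  have "(\<Sum>j\<le>Suc q. \<Sum>i\<le>j. x i * a i * a j) + (\<Sum>i=1..Suc q. of_nat i * a i)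
       = z * (\<Sum>j\<le>Suc q. \<Sum>i\<le>j. a i * a j) - (\<Sum>k\<le>Suc q. a k)"
    unfolding e1 e2 e3 e4 using IH' step' by simp algebra
  then show ?case unfolding a_def .
qed


lemma pl_upt: "prod_list (map (\<lambda>y. w - y) (map x [0..<Suc q])) = (\<Prod>k\<le>q. (w - x k :: complex))"
  by (induction q) auto

lemma dF_alg:
  fixes P p1 f :: "complex \<Rightarrow> complex"
  assumes df: "(f has_field_derivative (-t) * f w) (at w)"
  and dP': "(P has_field_derivative P w * p1 w) (at w)"
  and dp1': "(p1 has_field_derivative - p2) (at w)"
  and Pne: "P w \<noteq> 0"
  shows "((\<lambda>w. f w / P w * (1 + t*w - w * p1 w) / 2) has_field_derivative
     f w / P w * (w * ((p1 w)^2 + p2)/2 - p1 w - t^2 * w / 2)) (at w)"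
  apply (rule derivative_eq_intros df dP' dp1' Pne | rule refl | simp only: zero_neq_numeral not_False_eq_True)+
  using Pne apply (simp_all add: field_simps power2_eq_square)
  done

theorem corollary3:
  fixes x :: "nat \<Rightarrow> complex" and q :: nat and \<tau> :: real
  defines "xs \<equiv> map x [0..<Suc q]"
  shows "(\<Sum>j\<le>q. \<Sum>i\<le>j. x i * expdd (-\<tau>) (xs @ [x i, x j])) =
    (if q > 0 then
        complex_of_real (\<tau>^2) * x 0 / 2 * expdd (-\<tau>) xs
        + complex_of_real (\<tau>^2) / 2 * expdd (-\<tau>) (map x [1..<Suc q])
        - (\<Sum>i=1..q. of_nat i * expdd (-\<tau>) (xs @ [x i]))
     else complex_of_real (\<tau>^2) * x 0 / 2 * exp (- complex_of_real \<tau> * x 0))"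
proof -
  define f where "f = (\<lambda>z::complex. exp (complex_of_real (-\<tau>) * z))"
  define t where "t = complex_of_real \<tau>"
  define r where "r = 1 + (\<Sum>k\<le>q. norm (x k))"
  define C where "C = circlepath 0 r"
  define c where "c = 2 * complex_of_real pi * \<i>"
  define E where "E = expdd (-\<tau>)"
  define pl where "pl = (\<lambda>(w::complex) ys. prod_list (map (\<lambda>y. w - y) ys))"
  define P where "P = (\<lambda>w. \<Prod>k\<le>q. (w - x k))"
  define p1 where "p1 = (\<lambda>w. \<Sum>k\<le>q. 1 / (w - x k))"
  define B where "B = (\<lambda>w. \<Sum>j\<le>q. \<Sum>i\<le>j. 1/(w - x i) * (1/(w - x j)))"
  have sumnn: "0 \<le> (\<Sum>k\<le>q. norm (x k))" by (simp add: sum_nonneg)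
  then have rpos: "0 < r" unfolding r_def by simp
  have nodes: "norm (x k) < r" if "k \<le> q" for k
  proof -
    have "norm (x k) \<le> (\<Sum>k\<le>q. norm (x k))"
      using that by (intro member_le_sum) auto
    then show ?thesis unfolding r_def by simp
  qed
  have fhol: "f holomorphic_on UNIV" unfolding f_def by (intro holomorphic_intros)
  have setxs: "set xs = x ` {..q}" unfolding xs_def by (simp only: set_map set_upt atLeast0LessThan lessThan_Suc_atMost)
  have HC: "((\<lambda>z. f z / pl z ys) has_contour_integral (c * E ys)) C" if "set ys \<subseteq> x ` {..q}" for ys
  proof -
    have "\<forall>y\<in>set ys. norm y < r" using that nodes by auto
    from dd_circle[OF fhol this rpos] show ?thesis
      unfolding C_def c_def E_def expdd_def pl_def f_def by simp
  qed
  have plxs: "pl w xs = P w" for w unfolding pl_def P_def xs_def by (rule pl_upt)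
  have c0: "c \<noteq> 0" unfolding c_def by simp
  have H1: "((\<lambda>z. \<Sum>j\<le>q. \<Sum>i\<le>j. x i * (f z / pl z (xs @ [x i, x j]))) has_contour_integral
       (\<Sum>j\<le>q. \<Sum>i\<le>j. x i * (c * E (xs @ [x i, x j])))) C"
    by (intro has_contour_integral_sum has_contour_integral_lmul HC) (auto simp: setxs)
  have H2: "((\<lambda>z. \<Sum>i=1..q. of_nat i * (f z / pl z (xs @ [x i]))) has_contour_integral
       (\<Sum>i=1..q. of_nat i * (c * E (xs @ [x i])))) C"
    by (intro has_contour_integral_sum has_contour_integral_lmul HC) (auto simp: setxs)
  define Z where "Z = (if q > 0 then t^2 * x 0 / 2 * E xs + t^2 / 2 * E (map x [1..<Suc q])
                       else t^2 * x 0 / 2 * exp (- t * x 0))"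
  have H3: "((\<lambda>z. t^2 / 2 * z * (f z / pl z xs)) has_contour_integral (c * Z)) C"
  proof (cases "q > 0")
    case True
    have xs0: "xs = x 0 # map x [1..<Suc q]" unfolding xs_def by (simp only: upt_conv_Cons[OF zero_less_Suc] list.map One_nat_def)
    have "((\<lambda>z. t^2 * x 0 / 2 * (f z / pl z xs) + t^2 / 2 * (f z / pl z (map x [1..<Suc q])))
          has_contour_integral (t^2 * x 0 / 2 * (c * E xs) + t^2 / 2 * (c * E (map x [1..<Suc q])))) C"
      by (intro has_contour_integral_add has_contour_integral_lmul HC) (auto simp: setxs)
    then have "((\<lambda>z. t^2 / 2 * z * (f z / pl z xs)) has_contour_integral
           (t^2 * x 0 / 2 * (c * E xs) + t^2 / 2 * (c * E (map x [1..<Suc q])))) C"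
    proof (rule has_contour_integral_eq)
      fix z assume "z \<in> path_image C"
      then have "norm z = r" using rpos by (simp add: C_def)
      then have nz: "z - x 0 \<noteq> 0" using nodes[of 0] by auto
      obtain Q where hQ: "pl z (map x [1..<Suc q]) = Q" by simp
      have hx: "pl z xs = (z - x 0) * Q" unfolding hQ[symmetric] pl_def by (subst xs0) simp
      show "t^2 * x 0 / 2 * (f z / pl z xs) + t^2 / 2 * (f z / pl z (map x [1..<Suc q]))
              = t^2 / 2 * z * (f z / pl z xs)"
        unfolding hx hQ using nz by (cases "Q = 0") (simp_all add: field_simps)
    qed
    then show ?thesis using True unfolding Z_def by (simp add: algebra_simps)
  next
    case False
    then have q0: "q = 0" by simp
    have "((\<lambda>u. (t^2/2 * u * f u) / (u - x 0)) has_contour_integral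
          (2 * of_real pi * \<i> * (t^2/2 * x 0 * f (x 0)))) (circlepath 0 r)"
      by (rule Cauchy_integral_circlepath_simple)
         (use nodes[of 0] in \<open>auto simp: f_def intro!: holomorphic_intros\<close>)
    then show ?thesis using q0 unfolding Z_def C_def c_def pl_def xs_def f_def t_def
      by (simp add: algebra_simps)
  qed
  define F where "F = (\<lambda>w. f w / P w * (1 + t*w - w * p1 w) / 2)"
  define G where "G = (\<lambda>w. f w / P w * (w * B w - p1 w - t^2 * w / 2))"
  define S where "S = - (x ` {..q})"
  have dF: "(F has_field_derivative G w) (at w)" if "w \<in> S" for w
  proof -
    have ne: "\<forall>k\<le>q. w \<noteq> x k" using that S_def by auto
    have Pne: "P w \<noteq> 0" unfolding P_def using ne by auto
    have sq: "2 * B w = (p1 w)^2 + (\<Sum>k\<le>q. 1/(w - x k)^2)"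
      unfolding B_def p1_def using sq_sum[of "\<lambda>k. 1/(w - x k)" q] by (simp add: power_divide)
    have dP': "(P has_field_derivative P w * p1 w) (at w)" unfolding P_def p1_def by (rule dP[OF ne])
    have dp1': "(p1 has_field_derivative - (\<Sum>k\<le>q. 1/(w - x k)^2)) (at w)" unfolding p1_def by (rule dp1[OF ne])
    have df: "(f has_field_derivative (-t) * f w) (at w)"
      unfolding f_def t_def by (auto intro!: derivative_eq_intros)
    have der: "(F has_field_derivative f w / P w * (w * ((p1 w)^2 + (\<Sum>k\<le>q. 1/(w - x k)^2))/2 - p1 w - t^2 * w / 2)) (at w)"
      unfolding F_def by (rule dF_alg[OF df dP' dp1' Pne])
    have Bw: "B w = ((p1 w)^2 + (\<Sum>k\<le>q. 1/(w - x k)^2))/2" using sq by (simp add: mult.commute)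
    show ?thesis unfolding G_def Bw times_divide_eq_right by (rule der)
  qed
  have pathC: "path_image C \<subseteq> S" using nodes rpos unfolding C_def S_def by force
  have prim: "(G has_contour_integral (F (pathfinish C) - F (pathstart C))) C"
    by (rule contour_integral_primitive[where S=S])
       (use dF pathC in \<open>auto intro: has_field_derivative_at_within simp: C_def\<close>)
  then have H4: "(G has_contour_integral 0) C" by (simp add: C_def)
  have Hall: "((\<lambda>z. (\<Sum>j\<le>q. \<Sum>i\<le>j. x i * (f z / pl z (xs @ [x i, x j])))
                  + (\<Sum>i=1..q. of_nat i * (f z / pl z (xs @ [x i])))
                  - t^2 / 2 * z * (f z / pl z xs)) has_contour_integral
        ((\<Sum>j\<le>q. \<Sum>i\<le>j. x i * (c * E (xs @ [x i, x j])))
          + (\<Sum>i=1..q. of_nat i * (c * E (xs @ [x i]))) - c * Z)) C"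
    by (rule has_contour_integral_diff[OF has_contour_integral_add[OF H1 H2] H3])
  have plapp: "pl z (xs @ ys) = P z * pl z ys" for z ys unfolding pl_def by (simp add: plxs[unfolded pl_def])
  have "(G has_contour_integral
        ((\<Sum>j\<le>q. \<Sum>i\<le>j. x i * (c * E (xs @ [x i, x j])))
          + (\<Sum>i=1..q. of_nat i * (c * E (xs @ [x i]))) - c * Z)) C"
  proof (rule has_contour_integral_eq[OF Hall])
    fix z assume "z \<in> path_image C"
    then have "z \<in> S" using pathC by auto
    then have ne: "\<forall>k\<le>q. z \<noteq> x k" unfolding S_def by auto
    have e1: "(\<Sum>j\<le>q. \<Sum>i\<le>j. x i * (f z / pl z (xs @ [x i, x j])))
        = f z / P z * (\<Sum>j\<le>q. \<Sum>i\<le>j. x i * (1/(z - x i)) * (1/(z - x j)))"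
      by (simp add: plapp pl_def plxs[unfolded pl_def] sum_distrib_left divide_inverse inverse_mult_distrib mult_ac)
    have e2: "(\<Sum>i=1..q. of_nat i * (f z / pl z (xs @ [x i])))
        = f z / P z * (\<Sum>i=1..q. of_nat i * (1/(z - x i)))"
      by (simp add: plapp pl_def plxs[unfolded pl_def] sum_distrib_left divide_inverse inverse_mult_distrib mult_ac)
    have e3: "t^2 / 2 * z * (f z / pl z xs) = f z / P z * (t^2 * z / 2)"
      by (simp add: plxs mult_ac)
    have k: "(\<Sum>j\<le>q. \<Sum>i\<le>j. x i * (1/(z - x i)) * (1/(z - x j))) + (\<Sum>i=1..q. of_nat i * (1/(z - x i)))
       = z * B z - p1 z" unfolding B_def p1_def by (rule key[OF ne])
    show "(\<Sum>j\<le>q. \<Sum>i\<le>j. x i * (f z / pl z (xs @ [x i, x j])))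
                  + (\<Sum>i=1..q. of_nat i * (f z / pl z (xs @ [x i])))
                  - t^2 / 2 * z * (f z / pl z xs) = G z"
      unfolding e1 e2 e3 G_def
      by (simp only: distrib_left[symmetric] right_diff_distrib[symmetric] k)
  qed
  from has_contour_integral_unique[OF this H4]
  have "c * ((\<Sum>j\<le>q. \<Sum>i\<le>j. x i * E (xs @ [x i, x j]))
          + (\<Sum>i=1..q. of_nat i * E (xs @ [x i])) - Z) = 0"
    by (simp add: sum_distrib_left algebra_simps)
  then have main: "(\<Sum>j\<le>q. \<Sum>i\<le>j. x i * E (xs @ [x i, x j]))
       = Z - (\<Sum>i=1..q. of_nat i * E (xs @ [x i]))"
  proof -
    from \<open>c * _ = 0\<close> c0 have "(\<Sum>j\<le>q. \<Sum>i\<le>j. x i * E (xs @ [x i, x j]))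
          + (\<Sum>i=1..q. of_nat i * E (xs @ [x i])) - Z = 0" by simp
    then show ?thesis by (simp add: eq_diff_eq diff_eq_eq)
  qed
  show ?thesis
  proof (cases "q > 0")
    case True
    then show ?thesis using main unfolding Z_def E_def t_def by simp
  next
    case False
    then show ?thesis using main unfolding Z_def E_def t_def by simp
  qed
qed

end
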